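(* Let $x,y \in A$ be a regular exact pair of zero divisors. Furthermore, let $a,b \in A$ be elements such that $a$ or $b$ is weakly regular on the $A$-module $A/(x,y)$. Then the $A$-submodule \[ Q_{\eta_b,\gamma_a} = \big\{\, \psi \in \operatorname{M}_2(A) \,\big|\, \psi\eta_b=\gamma_a\xi \text{ for some } \xi \in \operatorname{M}_2(A) \,\big\} \] of $\operatorname{M}_2(A)$ is generated by the following five matrices: \[ \psi_1 = \begin{pmatrix} 0 & 1 \\ 0 & 0 \end{pmatrix},\ \psi_2 = \begin{pmatrix} 0 & 0 \\ x & b \end{pmatrix},\ \psi_3 = \begin{pmatrix} 0 & 0 \\ 0 & y \end{pmatrix},\ \psi_4 = \begin{pmatrix} x & 0 \\ 0 & 0 \end{pmatrix},\ \psi_5 = \begin{pmatrix} a & 0 \\ y & 0 \end{pmatrix}. \]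
   Context: $A$ is a commutative noetherian local ring. Two non-units $x,y\in A$ form an exact pair of zero divisors if $\operatorname{Ann}_A(x)=(y)$ and $\operatorname{Ann}_A(y)=(x)$; the pair is regular if moreover $(x)\cap(y)=0$ (equivalently, $x$ is regular on $A/(y)$, equivalently $y$ is regular on $A/(x)$). An element $a$ is weakly regular on an $A$-module $M$ if multiplication by $a$ on $M$ is injective. For $c\in A$, $\gamma_c$ and $\eta_c$ are the $2\times 2$ matrices $\gamma_c=\begin{pmatrix} x & c\\ 0 & y\end{pmatrix}$ and $\eta_c=\begin{pmatrix} y & -c\\ 0 & x\end{pmatrix}$, and $\operatorname{M}_2(A)$ denotes the $A$-module of $2\times 2$ matrices over $A$. *)

theory Defs
  imports "HOL-Analysis.Analysis"
begin

definition is_ideal :: "'a::comm_ring_1 set \<Rightarrow> bool" where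
  "is_ideal I \<longleftrightarrow> 0 \<in> I \<and> (\<forall>u\<in>I. \<forall>v\<in>I. u + v \<in> I) \<and> (\<forall>r. \<forall>u\<in>I. r * u \<in> I)"

definition gen_ideal :: "'a::comm_ring_1 set \<Rightarrow> 'a set" where
  "gen_ideal S = {t. \<exists>r. t = (\<Sum>s\<in>S. r s * s)}"

definition noetherian_ring :: "'a::comm_ring_1 itself \<Rightarrow> bool" where
  "noetherian_ring _ \<longleftrightarrow> (\<forall>I::'a set. is_ideal I \<longrightarrow> (\<exists>S. finite S \<and> I = gen_ideal S))"

definition maximal_ideal :: "'a::comm_ring_1 set \<Rightarrow> bool" where
  "maximal_ideal m \<longleftrightarrow> is_ideal m \<and> m \<noteq> UNIV \<and>
     (\<forall>J. is_ideal J \<and> m \<subseteq> J \<longrightarrow> J = m \<or> J = UNIV)"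

definition local_ring :: "'a::comm_ring_1 itself \<Rightarrow> bool" where
  "local_ring _ \<longleftrightarrow> (\<exists>!m::'a set. maximal_ideal m)"

definition Ann :: "'a::comm_ring_1 \<Rightarrow> 'a set" where
  "Ann x = {r. r * x = 0}"

definition pideal :: "'a::comm_ring_1 \<Rightarrow> 'a set" where
  "pideal x = {r * x | r. True}"

definition ideal2 :: "'a::comm_ring_1 \<Rightarrow> 'a \<Rightarrow> 'a set" where
  "ideal2 x y = {r * x + s * y | r s. True}"

definition exact_pair :: "'a::comm_ring_1 \<Rightarrow> 'a \<Rightarrow> bool" where
  "exact_pair x y \<longleftrightarrow> \<not> x dvd 1 \<and> \<not> y dvd 1 \<and> Ann x = pideal y \<and> Ann y = pideal x"

definition regular_exact_pair :: "'a::comm_ring_1 \<Rightarrow> 'a \<Rightarrow> bool" where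
  "regular_exact_pair x y \<longleftrightarrow> exact_pair x y \<and> pideal x \<inter> pideal y = {0}"

text \<open>a is weakly regular on the module A/I: multiplication by a on A/I is injective,
  i.e. a*m \<in> I implies m \<in> I.\<close>
definition weakly_regular_quot :: "'a::comm_ring_1 \<Rightarrow> 'a set \<Rightarrow> bool" where
  "weakly_regular_quot a I \<longleftrightarrow> (\<forall>m. a * m \<in> I \<longrightarrow> m \<in> I)"

definition mat2 :: "'a::zero \<Rightarrow> 'a \<Rightarrow> 'a \<Rightarrow> 'a \<Rightarrow> 'a^2^2" where
  "mat2 p q r s = (\<chi> i j. if i = 1 then (if j = 1 then p else q) else (if j = 1 then r else s))"

definition mscale :: "'a::times \<Rightarrow> 'a^2^2 \<Rightarrow> 'a^2^2" where
  "mscale c M = (\<chi> i j. c * (M $ i $ j))"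

definition gamma_mat :: "'a::comm_ring_1 \<Rightarrow> 'a \<Rightarrow> 'a \<Rightarrow> 'a^2^2" where
  "gamma_mat x y c = mat2 x c 0 y"

definition eta_mat :: "'a::comm_ring_1 \<Rightarrow> 'a \<Rightarrow> 'a \<Rightarrow> 'a^2^2" where
  "eta_mat x y c = mat2 y (- c) 0 x"

definition Qset :: "'a::comm_ring_1^2^2 \<Rightarrow> 'a^2^2 \<Rightarrow> ('a^2^2) set" where
  "Qset eta gamma = {psi. \<exists>xi. psi ** eta = gamma ** xi}"

definition span_mats :: "('a::comm_ring_1^2^2) list \<Rightarrow> ('a^2^2) set" where
  "span_mats Ms = {M. \<exists>c. M = (\<Sum>i<length Ms. mscale (c i) (Ms ! i))}"

end

theory Submission
  imports Defs
begin

lemma mat2_eq: "mat2 p q r s = (mat2 p2 q2 r2 s2 :: 'a::zero^2^2) \<longleftrightarrow> p = p2 \<and> q = q2 \<and> r = r2 \<and> s = s2"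
  by (simp add: mat2_def vec_eq_iff forall_2)

lemma mat2_mult: "mat2 p q r s ** mat2 p2 q2 r2 s2 =
   (mat2 (p * p2+q * r2) (p * q2+q *  s2) (r * p2+s * r2) (r * q2+s *  s2) :: 'a::comm_ring_1^2^2)"
  by (simp add: mat2_def vec_eq_iff forall_2 matrix_matrix_mult_def sum_2)

lemma mat2_all: "(M::'a::zero^2^2) = mat2 (M$1$1) (M$1$2) (M$2$1) (M$2$2)"
  by (simp add: mat2_def vec_eq_iff forall_2)

lemma mscale_mat2: "mscale c (mat2 p q r s) = mat2 (c * p) (c * q) (c * r) (c *  s)"
  by (simp add: mat2_def mscale_def vec_eq_iff forall_2)

lemma add_mat2: "mat2 p q r s + mat2 p2 q2 r2 s2 = (mat2 (p+p2) (q+q2) (r+r2) (s+s2) :: 'a::comm_ring_1^2^2)"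
  by (simp add: mat2_def vec_eq_iff forall_2)

lemma eta_mult: "mat2 p q r s ** eta_mat x y b = mat2 (p * y) (-p * b + q * x) (r * y) (-r * b + s * x)"
  by (simp add: eta_mat_def mat2_mult)

lemma gamma_mult: "gamma_mat x y a ** mat2 e f g h = mat2 (x * e + a * g) (x * f + a * h) (y * g) (y * h)"
  by (simp add: gamma_mat_def mat2_mult)

lemma Q_iff: "mat2 p q r s \<in> Qset (eta_mat x y b) (gamma_mat x y a) \<longleftrightarrow>
  (\<exists>e f g h. p * y = x * e + a * g \<and> -p * b + q * x = x * f + a * h \<and> r * y = y * g \<and> -r * b + s * x = y * h)"
proof
  assume "mat2 p q r s \<in> Qset (eta_mat x y b) (gamma_mat x y a)"
  then obtain xi where "mat2 p q r s ** eta_mat x y b = gamma_mat x y a ** xi"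
    unfolding Qset_def by blast
  then have "mat2 p q r s ** eta_mat x y b = gamma_mat x y a ** mat2 (xi$1$1) (xi$1$2) (xi$2$1) (xi$2$2)"
    using mat2_all[of xi] by simp
  then show "\<exists>e f g h. p * y = x * e + a * g \<and> -p * b + q * x = x * f + a * h \<and> r * y = y * g \<and> -r * b + s * x = y * h"
    unfolding eta_mult gamma_mult mat2_eq by blast
next
  assume "\<exists>e f g h. p * y = x * e + a * g \<and> -p * b + q * x = x * f + a * h \<and> r * y = y * g \<and> -r * b + s * x = y * h"
  then obtain e f g h where "p * y = x * e + a * g \<and> -p * b + q * x = x * f + a * h \<and> r * y = y * g \<and> -r * b + s * x = y * h"
    by blast
  then have "mat2 p q r s ** eta_mat x y b = gamma_mat x y a ** mat2 e f g h"
    unfolding eta_mult gamma_mult mat2_eq by blast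
  then show "mat2 p q r s \<in> Qset (eta_mat x y b) (gamma_mat x y a)"
    unfolding Qset_def by blast
qed

lemma span_iff: "mat2 p q r s \<in> span_mats [mat2 0 1 0 0, mat2 0 0 x b, mat2 0 0 0 y, mat2 x 0 0 0, mat2 a 0 y 0]
  \<longleftrightarrow> (\<exists>c1 c2 c3 c4 c5. p = c4 * x + c5 * a \<and> q = c1 \<and> r = c2 * x + c5 * y \<and> s = c2 * b + c3 * y)"
proof -
  have e: "(\<Sum>i<length [mat2 0 1 0 0, mat2 0 0 x b, mat2 0 0 0 y, mat2 x 0 0 0, mat2 a 0 y 0].
     mscale (c i) ([mat2 0 1 0 0, mat2 0 0 x b, mat2 0 0 0 y, mat2 x 0 0 0, mat2 a 0 y 0] ! i))
    = mat2 (c 3  *  x + c 4  *  a) (c 0) (c 1  *  x + c 4  *  y) (c 1  *  b + c 2  *  y)" for c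
    by (simp add: numeral_eq_Suc lessThan_Suc mscale_mat2 add_mat2 algebra_simps)
  show ?thesis
  proof
    assume "mat2 p q r s \<in> span_mats [mat2 0 1 0 0, mat2 0 0 x b, mat2 0 0 0 y, mat2 x 0 0 0, mat2 a 0 y 0]"
    then obtain c :: "nat \<Rightarrow> 'a" where "mat2 p q r s = mat2 (c 3  *  x + c 4  *  a) (c 0) (c 1  *  x + c 4  *  y) (c 1  *  b + c 2  *  y)"
      unfolding span_mats_def e by auto
    then show "\<exists>c1 c2 c3 c4 c5. p = c4 * x + c5 * a \<and> q = c1 \<and> r = c2 * x + c5 * y \<and> s = c2 * b + c3 * y"
      by (auto simp: mat2_eq)
  next
    assume "\<exists>c1 c2 c3 c4 c5. p = c4 * x + c5 * a \<and> q = c1 \<and> r = c2 * x + c5 * y \<and> s = c2 * b + c3 * y"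
    then obtain c1 c2 c3 c4 c5 where h: "p = c4 * x + c5 * a \<and> q = c1 \<and> r = c2 * x + c5 * y \<and> s = c2 * b + c3 * y" by blast
    define c where "c = (\<lambda>i::nat. if i = 0 then c1 else if i = 1 then c2 else if i = 2 then c3 else if i = 3 then c4 else c5)"
    have "mat2 p q r s = mat2 (c 3  *  x + c 4  *  a) (c 0) (c 1  *  x + c 4  *  y) (c 1  *  b + c 2  *  y)"
      using h by (simp add: c_def)
    then show "mat2 p q r s \<in> span_mats [mat2 0 1 0 0, mat2 0 0 x b, mat2 0 0 0 y, mat2 x 0 0 0, mat2 a 0 y 0]"
      unfolding span_mats_def e by blast
  qed
qed


lemma diff0: "(l::'a::comm_ring_1) - r = d \<Longrightarrow> d = 0 \<Longrightarrow> l = r" by simp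

theorem lemma7p3:
  fixes x y a b :: "'a::comm_ring_1"
  assumes "noetherian_ring TYPE('a)"
    and "local_ring TYPE('a)"
    and "regular_exact_pair x y"
    and "weakly_regular_quot a (ideal2 x y) \<or> weakly_regular_quot b (ideal2 x y)"
  shows "Qset (eta_mat x y b) (gamma_mat x y a) =
         span_mats [mat2 0 1 0 0, mat2 0 0 x b, mat2 0 0 0 y, mat2 x 0 0 0, mat2 a 0 y 0]"
proof -
  have ex: "exact_pair x y" and int: "pideal x \<inter> pideal y = {0}"
    using assms(3) unfolding regular_exact_pair_def by blast+
  have AX: "Ann x = pideal y" and AY: "Ann y = pideal x"
    using ex unfolding exact_pair_def by blast+
  have annx: "\<exists>k. z = k * y" if "z * x = 0" for z
  proof -
    have "z \<in> Ann x" using that unfolding Ann_def by blast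
    then have "z \<in> pideal y" using AX by simp
    then show ?thesis unfolding pideal_def by blast
  qed
  have anny: "\<exists>k. z = k * x" if "z * y = 0" for z
  proof -
    have "z \<in> Ann y" using that unfolding Ann_def by blast
    then have "z \<in> pideal x" using AY by simp
    then show ?thesis unfolding pideal_def by blast
  qed
  have xy: "x * y = 0"
  proof -
    have "y = 1 * y" by simp
    then have "y \<in> pideal y" unfolding pideal_def by blast
    then have "y \<in> Ann x" using AX by simp
    then have "y * x = 0" unfolding Ann_def by blast
    then show ?thesis by (simp only: mult.commute)
  qed
  have inter: "z * y = 0" if "z * y = w * x" for z w
  proof -
    have "z * y \<in> pideal x" unfolding pideal_def using that by blast
    moreover have "z * y \<in> pideal y" unfolding pideal_def by blast
    ultimately show ?thesis using int by blast
  qed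
  have inter2: "z * x = 0" if "z * x = w * y" for z w
    using inter[of w z] that by simp
  have wr: "\<exists>u v. m = u * x + v * y" if "weakly_regular_quot c (ideal2 x y)" "c * m = r0 * x + s0 * y" for c m r0 s0
  proof -
    have "c * m \<in> ideal2 x y" using that(2) unfolding ideal2_def by blast
    then have "m \<in> ideal2 x y" using that(1) unfolding weakly_regular_quot_def by blast
    then show ?thesis unfolding ideal2_def by blast
  qed
  have sol: "p = c4 * x + v * a" if "p - a * v = c4 * x" for p c4 v
  proof -
    from that have "p = c4 * x + a * v" by (simp only: diff_eq_eq)
    then show ?thesis by (simp only: mult.commute[of v a])
  qed
  have sol2: "s = u * b + c3 * y" if "s - u * b = c3 * y" for s u c3
  proof -
    from that have "s = c3 * y + u * b" by (simp only: diff_eq_eq)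
    then show ?thesis by (simp only: add.commute[of "u * b"])
  qed
  show ?thesis
  proof (rule set_eqI)
    fix M :: "'a^2^2"
    obtain p q r s where M: "M = mat2 p q r s" using mat2_all by blast
    show "M \<in> Qset (eta_mat x y b) (gamma_mat x y a) \<longleftrightarrow>
       M \<in> span_mats [mat2 0 1 0 0, mat2 0 0 x b, mat2 0 0 0 y, mat2 x 0 0 0, mat2 a 0 y 0]"
      unfolding M Q_iff span_iff
    proof
      assume "\<exists>e f g h. p * y = x * e + a * g \<and> -p * b + q * x = x * f + a * h \<and> r * y = y * g \<and> -r * b + s * x = y * h"
      then obtain e f g h where e1: "p * y = x * e + a * g" and e2: "-p * b + q * x = x * f + a * h"
        and e3: "r * y = y * g" and e4: "-r * b + s * x = y * h" by blast
      have E1: "p * y - (x * e + a * g) = 0" and E3: "r * y - y * g = 0" and E4: "-r * b + s * x - y * h = 0"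
        using e1 e3 e4 by (simp_all only: eq_iff_diff_eq_0[symmetric])
      show "\<exists>c1 c2 c3 c4 c5. p = c4 * x + c5 * a \<and> q = c1 \<and> r = c2 * x + c5 * y \<and> s = c2 * b + c3 * y"
        using assms(4)
      proof
        assume wa: "weakly_regular_quot a (ideal2 x y)"
        have "a * g = (-e) * x + p * y"
          by (rule diff0[of _ _ "-(p * y - (x * e + a * g))"]) (simp add: algebra_simps, simp only: E1, simp?)
        then obtain u v where g: "g = u * x + v * y" using wr[OF wa] by blast
        have G: "g - (u * x + v * y) = 0" using g by (simp only: eq_iff_diff_eq_0[symmetric])
        have "(r-g) * y = 0"
          by (rule diff0[of _ _ "r * y - y * g"]) (simp add: algebra_simps, simp only: E3, simp?)
        then obtain t where t: "r - g = t * x" using anny by blast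
        have T: "r - g - t * x = 0" using t by (simp only: eq_iff_diff_eq_0[symmetric])
        have "(p - a * v) * y = (e + a * u) * x"
          by (rule diff0[of _ _ "(p * y - (x * e + a * g)) + a * (g - (u * x+v * y))"]) (simp add: algebra_simps, simp only: E1 G, simp?)
        then have "(p - a * v) * y = 0" by (rule inter)
        then obtain c4 where c4: "p - a * v = c4 * x" using anny by blast
        have r: "r = (u+t) * x + v * y"
          by (rule diff0[of _ _ "(r - g - t * x) + (g - (u * x+v * y))"]) (simp add: algebra_simps, simp only: T G, simp?)
        have R: "r - ((u+t) * x + v * y) = 0" using r by (simp only: eq_iff_diff_eq_0[symmetric])
        have "(s - (u+t) * b) * x = (h + v * b) * y"
          by (rule diff0[of _ _ "(-r * b + s * x - y * h) + b * (r - ((u+t) * x+v * y))"]) (simp add: algebra_simps, simp only: E4 R, simp?)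
        then have "(s - (u+t) * b) * x = 0" by (rule inter2)
        then obtain c3 where c3: "s - (u+t) * b = c3 * y" using annx by blast
        show ?thesis
          apply (rule exI[of _ q], rule exI[of _ "u+t"], rule exI[of _ c3], rule exI[of _ c4], rule exI[of _ v])
          using sol[OF c4] sol2[OF c3] r by (intro conjI refl)
      next
        assume wb: "weakly_regular_quot b (ideal2 x y)"
        have "b * r = s * x + (-h) * y"
          by (rule diff0[of _ _ "-(-r * b + s * x - y * h)"]) (simp add: algebra_simps, simp only: E4, simp?)
        then obtain u v where r: "r = u * x + v * y" using wr[OF wb] by blast
        have R: "r - (u * x + v * y) = 0" using r by (simp only: eq_iff_diff_eq_0[symmetric])
        have "(s - u * b) * x = (h + v * b) * y"
          by (rule diff0[of _ _ "(-r * b+s * x-y * h) + b * (r - (u * x+v * y))"]) (simp add: algebra_simps, simp only: E4 R, simp?)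
        then have "(s - u * b) * x = 0" by (rule inter2)
        then obtain c3 where c3: "s - u * b = c3 * y" using annx by blast
        have "(g - v * y) * y = 0"
          by (rule diff0[of _ _ "-(r * y - y * g) + y * (r - (u * x+v * y)) + u * (x * y)"]) (simp add: algebra_simps, simp only: E3 R xy, simp?)
        then obtain w where w: "g - v * y = w * x" using anny by blast
        have W: "g - v * y - w * x = 0" using w by (simp only: eq_iff_diff_eq_0[symmetric])
        have "(p - a * v) * y = (e + a * w) * x"
          by (rule diff0[of _ _ "(p * y - (x * e+a * g)) + a * (g - v * y - w * x)"]) (simp add: algebra_simps, simp only: E1 W, simp?)
        then have "(p - a * v) * y = 0" by (rule inter)
        then obtain c4 where c4: "p - a * v = c4 * x" using anny by blast
        show ?thesis
          apply (rule exI[of _ q], rule exI[of _ u], rule exI[of _ c3], rule exI[of _ c4], rule exI[of _ v])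
          using sol[OF c4] sol2[OF c3] r by (intro conjI refl)
      qed
    next
      assume "\<exists>c1 c2 c3 c4 c5. p = c4 * x + c5 * a \<and> q = c1 \<and> r = c2 * x + c5 * y \<and> s = c2 * b + c3 * y"
      then obtain c1 c2 c3 c4 c5 where h: "p = c4 * x + c5 * a" "q = c1" "r = c2 * x + c5 * y" "s = c2 * b + c3 * y" by blast
      have 1: "p * y = x * 0 + a * (c5 * y)"
        unfolding h by (rule diff0[of _ _ "c4 * (x * y)"]) (simp add: algebra_simps, simp only: xy, simp?)
      have 2: "-p * b + q * x = x * (c1 - c4 * b) + a * (-c5 * b)"
        unfolding h by (rule diff0[of _ _ 0]) (simp_all add: algebra_simps)
      have 3: "r * y = y * (c5 * y)"
        unfolding h by (rule diff0[of _ _ "c2 * (x * y)"]) (simp add: algebra_simps, simp only: xy, simp?)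
      have 4: "-r * b + s * x = y * (-c5 * b)"
        unfolding h by (rule diff0[of _ _ "c3 * (x * y)"]) (simp add: algebra_simps, simp only: xy, simp?)
      show "\<exists>e f g h. p * y = x * e + a * g \<and> -p * b + q * x = x * f + a * h \<and> r * y = y * g \<and> -r * b + s * x = y * h"
        apply (rule exI[of _ 0], rule exI[of _ "c1 - c4 * b"], rule exI[of _ "c5 * y"], rule exI[of _ "-c5 * b"])
        using 1 2 3 4 by (intro conjI refl)
    qed
  qed
qed

end
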